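(* Let $\Bbbk$ be a field of characteristic zero, let $n\geq 3$, $d\geq 2$, and $S=\Bbbk[x_1,\ldots,x_n]$. Then for every integer $\mu \in\left[2n-1, \mathrm{HF}(S,d)-\mathrm{HF}(S,d-1)\right]$ there exists an artinian monomial ideal $I$ minimally generated by $\mu$ elements of degree $d$ such that $S/I$ fails the WLP by injectivity in degree $d-1$. Moreover, this interval is non-empty except for the cases $(n,d) \in \{(4,2),(3,3),(3,2)\}$.
   Context: $\mathrm{HF}(A,k)=\dim_\Bbbk A_k$. For a monomial ideal $I$, $A=S/I$ fails the WLP in degree $i$ if $\times(x_1+\cdots+x_n): A_i\to A_{i+1}$ does not have maximal rank; it fails the WLP by injectivity in degree $i$ if in addition $\mathrm{HF}(A,i)\le \mathrm{HF}(A,i+1)$. *)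

theory Defs
  imports Main
begin

text \<open>Monomials of S = k[x_1,...,x_n] are encoded by exponent vectors
  m :: nat \<Rightarrow> nat supported on {0..<n} (variable x_(j+1) has exponent m j).
  A monomial ideal is given by a finite set G of monomial generators.\<close>

type_synonym monom = "nat \<Rightarrow> nat"

definition Mon :: "nat \<Rightarrow> monom set" where
  "Mon n = {m. \<forall>j\<ge>n. m j = 0}"

definition mdeg :: "nat \<Rightarrow> monom \<Rightarrow> nat" where
  "mdeg n m = (\<Sum>j<n. m j)"

definition mdvd :: "monom \<Rightarrow> monom \<Rightarrow> bool" where
  "mdvd g m \<longleftrightarrow> (\<forall>j. g j \<le> m j)"

definition in_ideal :: "monom set \<Rightarrow> monom \<Rightarrow> bool" where
  "in_ideal G m \<longleftrightarrow> (\<exists>g\<in>G. mdvd g m)"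

definition HF_S :: "nat \<Rightarrow> nat \<Rightarrow> nat" where
  "HF_S n i = card {m \<in> Mon n. mdeg n m = i}"

text \<open>Standard monomials of degree i: a k-basis of (S/I)_i\<close>
definition Std :: "nat \<Rightarrow> monom set \<Rightarrow> nat \<Rightarrow> monom set" where
  "Std n G i = {m \<in> Mon n. mdeg n m = i \<and> \<not> in_ideal G m}"

definition HF :: "nat \<Rightarrow> monom set \<Rightarrow> nat \<Rightarrow> nat" where
  "HF n G i = card (Std n G i)"

definition minimal_gens :: "monom set \<Rightarrow> bool" where
  "minimal_gens G \<longleftrightarrow> (\<forall>g\<in>G. \<forall>h\<in>G. mdvd g h \<longrightarrow> g = h)"

text \<open>S/I artinian: S/I is finite-dimensional, i.e. finitely many standard monomials\<close>
definition artinian :: "nat \<Rightarrow> monom set \<Rightarrow> bool" where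
  "artinian n G \<longleftrightarrow> finite {m \<in> Mon n. \<not> in_ideal G m}"

text \<open>The k-vector space (S/I)_i, realized as coefficient functions supported on Std n G i\<close>
definition Aspace :: "'k::field itself \<Rightarrow> nat \<Rightarrow> monom set \<Rightarrow> nat \<Rightarrow> (monom \<Rightarrow> 'k) set" where
  "Aspace _ n G i = {c. \<forall>m. m \<notin> Std n G i \<longrightarrow> c m = 0}"

text \<open>multiplication by x_1 + ... + x_n : (S/I)_i \<rightarrow> (S/I)_(i+1)\<close>
definition mult_ell :: "nat \<Rightarrow> monom set \<Rightarrow> nat \<Rightarrow> (monom \<Rightarrow> 'k::field) \<Rightarrow> (monom \<Rightarrow> 'k)" where
  "mult_ell n G i c = (\<lambda>m'. if m' \<in> Std n G (Suc i)
      then (\<Sum>j<n. if 0 < m' j then c (m'(j := m' j - 1)) else 0) else 0)"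

definition max_rank :: "'k::field itself \<Rightarrow> nat \<Rightarrow> monom set \<Rightarrow> nat \<Rightarrow> bool" where
  "max_rank K n G i \<longleftrightarrow>
     inj_on (mult_ell n G i) (Aspace K n G i) \<or>
     mult_ell n G i ` Aspace K n G i = Aspace K n G (Suc i)"

definition fails_WLP_inj :: "'k::field itself \<Rightarrow> nat \<Rightarrow> monom set \<Rightarrow> nat \<Rightarrow> bool" where
  "fails_WLP_inj K n G i \<longleftrightarrow> \<not> max_rank K n G i \<and> HF n G i \<le> HF n G (Suc i)"

end

theory Submission
  imports Defs "HOL-Library.Function_Algebras" "HOL.Vector_Spaces"
begin


definition sc :: "'k::field \<Rightarrow> (monom \<Rightarrow> 'k) \<Rightarrow> (monom \<Rightarrow> 'k)" where
  "sc a f = (\<lambda>x. a * f x)"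

interpretation FV: vector_space "sc :: 'k::field \<Rightarrow> _"
  by unfold_locales (auto simp: sc_def fun_eq_iff algebra_simps)

definition Asp :: "monom set \<Rightarrow> (monom \<Rightarrow> 'k::field) set" where
  "Asp X = {c. \<forall>m. m \<notin> X \<longrightarrow> c m = 0}"

definition dl :: "monom \<Rightarrow> monom \<Rightarrow> 'k::field" where
  "dl m = (\<lambda>x. if x = m then 1 else 0)"

lemma sum_fun_apply: "finite t \<Longrightarrow> (\<Sum>v\<in>t. f v) x = (\<Sum>v\<in>t. f v x)"
  by (induction t rule: finite_induct) auto

lemma Asp_span:
  assumes "finite X" "c \<in> Asp X"
  shows "c \<in> FV.span (dl ` X :: (monom \<Rightarrow> 'k::field) set)"
proof -
  have "c = (\<Sum>m\<in>X. sc (c m) (dl m))"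
  proof
    fix x
    have "(\<Sum>m\<in>X. sc (c m) (dl m)) x = (\<Sum>m\<in>X. c m * (if x = m then 1 else 0))"
      using assms(1) by (simp add: sum_fun_apply sc_def dl_def)
    also have "\<dots> = c x" using assms unfolding Asp_def
      by (cases "x \<in> X") (auto simp: if_distrib cong: if_cong)
    finally show "c x = (\<Sum>m\<in>X. sc (c m) (dl m)) x" by simp
  qed
  also have "\<dots> \<in> FV.span (dl ` X)"
    by (intro FV.span_sum FV.span_scale FV.span_base) auto
  finally show ?thesis .
qed

lemma dl_indep: "FV.independent (dl ` X :: (monom \<Rightarrow> 'k::field) set)"
  unfolding FV.independent_explicit_module
proof (intro allI impI)
  fix t u v
  assume t: "finite t" "t \<subseteq> dl ` X" "(\<Sum>v\<in>t. sc (u v) v) = (0 :: monom \<Rightarrow> 'k)" "v \<in> t"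
  then obtain m where m: "v = dl m" by auto
  have "0 = (\<Sum>w\<in>t. sc (u w) w) m" using t(3) by simp
  also have "\<dots> = (\<Sum>w\<in>t. u w * w m)" using t(1) by (simp add: sum_fun_apply sc_def)
  also have "\<dots> = u v * v m"
  proof (rule sum.remove[OF t(1) t(4), THEN trans])
    have "\<forall>w\<in>t - {v}. w m = 0"
    proof
      fix w assume w: "w \<in> t - {v}"
      then obtain m' where "w = dl m'" using t(2) by auto
      with w m have "m' \<noteq> m" by auto
      then show "w m = 0" using \<open>w = dl m'\<close> by (simp add: dl_def)
    qed
    then show "u v * v m + (\<Sum>w\<in>t - {v}. u w * w m) = u v * v m" by (simp add: sum.neutral)
  qed
  also have "\<dots> = u v" by (simp add: m dl_def)
  finally show "u v = 0" by simp
qed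

lemma dl_inj: "inj (dl :: monom \<Rightarrow> monom \<Rightarrow> 'k::field)"
  by (rule injI) (auto simp: dl_def fun_eq_iff split: if_splits)

lemma not_surj_abstract:
  fixes L :: "(monom \<Rightarrow> 'k::field) \<Rightarrow> (monom \<Rightarrow> 'k)"
  assumes fA: "finite A" and fB: "finite B"
    and add: "\<And>x y. L (x + y) = L x + L y"
    and hom: "\<And>a x. L (sc a x) = sc a (L x)"
    and c0: "c0 \<in> Asp A" "c0 \<noteq> 0" "L c0 = 0"
    and card: "card A \<le> card B"
  shows "L ` Asp A \<noteq> Asp B"
proof
  assume surj: "L ` Asp A = Asp B"
  have L0: "L 0 = 0" using add[of 0 0] by simp
  have ind0: "FV.independent {c0}"
    using c0(2) by (simp add: FV.independent_insert)
  have sub0: "{c0} \<subseteq> FV.span (dl ` A)" using Asp_span[OF fA c0(1)] by auto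
  obtain Bs where Bs: "{c0} \<subseteq> Bs" "Bs \<subseteq> FV.span (dl ` A)" "FV.independent Bs"
      "FV.span (dl ` A) \<subseteq> FV.span Bs"
    using FV.maximal_independent_subset_extend[OF sub0 ind0] by blast
  have "finite Bs \<and> card Bs \<le> card (dl ` A :: (monom \<Rightarrow> 'k) set)"
    by (rule FV.independent_span_bound[OF _ Bs(3) Bs(2)]) (use fA in auto)
  then have fBs: "finite Bs" and cBs: "card Bs \<le> card A"
    using card_image_le[OF fA, of "dl :: monom \<Rightarrow> monom \<Rightarrow> 'k"] by auto
  have lin: "L x \<in> FV.span (L ` Bs)" if "x \<in> FV.span Bs" for x
    using that
  proof (induction rule: FV.span_induct_alt)
    case base then show ?case using L0 FV.span_zero[of "L ` Bs"] by (simp add: zero_fun_def)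
  next
    case (step c x y)
    have e: "L (sc c x + y) = sc c (L x) + L y" by (simp only: add hom)
    have "L x \<in> L ` Bs" using step(1) by simp
    then show ?case unfolding e
      by (rule FV.span_add[OF FV.span_scale[OF FV.span_base] step(2)])
  qed
  have "L ` Bs \<subseteq> insert 0 (L ` (Bs - {c0}))" using c0(3) by auto
  then have spL: "FV.span (L ` Bs) \<subseteq> FV.span (L ` (Bs - {c0}))"
    by (metis FV.span_insert_0 FV.span_mono)
  have "dl ` B \<subseteq> FV.span (L ` (Bs - {c0}))"
  proof
    fix v assume "v \<in> (dl ` B :: (monom \<Rightarrow> 'k) set)"
    then have "v \<in> Asp B" by (auto simp: Asp_def dl_def)
    then obtain x where x: "x \<in> Asp A" "v = L x" using surj by blast
    have "x \<in> FV.span Bs" using Asp_span[OF fA x(1)] Bs(4) by auto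
    then show "v \<in> FV.span (L ` (Bs - {c0}))" using lin spL x(2) by auto
  qed
  then have "card (dl ` B :: (monom \<Rightarrow> 'k) set) \<le> card (L ` (Bs - {c0}))"
  proof -
    have "finite (L ` (Bs - {c0}))" using fBs by simp
    from FV.independent_span_bound[OF this dl_indep \<open>dl ` B \<subseteq> _\<close>] show ?thesis by simp
  qed
  also have "\<dots> \<le> card (Bs - {c0})" by (rule card_image_le) (use fBs in auto)
  also have "\<dots> = card Bs - 1" using Bs(1) fBs by simp
  finally have "card (dl ` B :: (monom \<Rightarrow> 'k) set) \<le> card Bs - 1" .
  moreover have "card (dl ` B :: (monom \<Rightarrow> 'k) set) = card B"
    by (rule card_image, rule inj_on_subset[OF dl_inj]) auto
  moreover have "card Bs \<ge> 1" using Bs(1) fBs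
    by (metis One_nat_def Suc_leI card_gt_0_iff empty_iff insert_subset)
  ultimately show False using cBs card by linarith
qed



lemma mdvd_deg: "mdvd g m \<Longrightarrow> mdeg n g \<le> mdeg n m"
  unfolding mdvd_def mdeg_def by (intro sum_mono) auto

lemma mdvd_eq:
  assumes "g \<in> Mon n" "m \<in> Mon n" "mdvd g m" "mdeg n g = mdeg n m"
  shows "g = m"
proof
  fix j
  show "g j = m j"
  proof (cases "j < n")
    case True
    show ?thesis
    proof (rule ccontr)
      assume "g j \<noteq> m j"
      with assms(3) have "g j < m j" unfolding mdvd_def by (metis le_neq_implies_less)
      then have "sum g {..<n} < sum m {..<n}"
        using True assms(3) unfolding mdvd_def
        by (intro sum_strict_mono_ex1) auto
      then show False using assms(4) unfolding mdeg_def by simp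
    qed
  next
    case False then show ?thesis using assms(1,2) unfolding Mon_def by auto
  qed
qed

lemma finite_deg: "finite {m \<in> Mon n. mdeg n m = i}"
proof -
  have "{m \<in> Mon n. mdeg n m = i} \<subseteq> {f. \<forall>x. (x \<in> {..<n} \<longrightarrow> f x \<in> {..i}) \<and> (x \<notin> {..<n} \<longrightarrow> f x = 0)}"
  proof (rule subsetI, simp only: mem_Collect_eq, intro allI conjI impI)
    fix m x assume m: "m \<in> Mon n \<and> mdeg n m = i" "x \<in> {..<n}"
    have "m x \<le> sum m {..<n}" using m(2) by (intro member_le_sum) auto
    then show "m x \<in> {..i}" using m(1) by (simp add: mdeg_def)
  next
    fix m x assume "m \<in> Mon n \<and> mdeg n m = i" "x \<notin> {..<n}" then show "m x = 0" by (auto simp: Mon_def)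
  qed
  moreover have "finite {f. \<forall>x. (x \<in> {..<n} \<longrightarrow> f x \<in> {..i}) \<and> (x \<notin> {..<n} \<longrightarrow> f x = (0::nat))}"
    by (rule finite_set_of_finite_funs) auto
  ultimately show ?thesis by (rule finite_subset)
qed

lemma HF_S_formula: "HF_S n d = (d + n - 1) choose d"
proof -
  let ?D = "{m \<in> Mon n. mdeg n m = d}"
  let ?L = "{l::nat list. size l = n \<and> sum_list l = d}"
  have "bij_betw (\<lambda>m. map m [0..<n]) ?D ?L"
  proof (rule bij_betw_byWitness[where f' = "\<lambda>l j. if j < n then l ! j else 0"])
    show "\<forall>a\<in>?D. (\<lambda>j. if j < n then map a [0..<n] ! j else 0) = a"
      by (auto simp: Mon_def fun_eq_iff)
    show "\<forall>a'\<in>?L. map (\<lambda>j. if j < n then a' ! j else 0) [0..<n] = a'"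
      by (auto simp: list_eq_iff_nth_eq)
    show "(\<lambda>m. map m [0..<n]) ` ?D \<subseteq> ?L"
      by (auto simp: mdeg_def sum_set_upt_conv_sum_list_nat[symmetric] atLeast0LessThan)
    show "(\<lambda>l j. if j < n then l ! j else 0) ` ?L \<subseteq> ?D"
    proof (rule image_subsetI, simp only: mem_Collect_eq, elim conjE, intro conjI)
      fix l :: "nat list" assume l: "length l = n" "sum_list l = d"
      show "(\<lambda>j. if j < n then l ! j else 0) \<in> Mon n" by (auto simp: Mon_def)
      have "map (\<lambda>j. if j < n then l ! j else 0) [0..<n] = l"
        using l by (auto simp: list_eq_iff_nth_eq)
      then have "sum_list l = sum_list (map (\<lambda>j. if j < n then l ! j else 0) [0..<n])" by simp
      then show "mdeg n (\<lambda>j. if j < n then l ! j else 0) = d"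
        using l(2) unfolding mdeg_def sum_set_upt_conv_sum_list_nat[symmetric] atLeast0LessThan[symmetric] by simp
    qed
  qed
  then have "card ?D = card ?L" by (rule bij_betw_same_card)
  then show ?thesis unfolding HF_S_def using card_length_sum_list[of n d] by simp
qed

lemma binom_mono_d: "2 \<le> d \<Longrightarrow> (n::nat) choose 2 \<le> (d + n - 2) choose d"
proof (induction d rule: dec_induct)
  case base then show ?case by simp
next
  case (step d)
  have "(d + n - 2) choose d \<le> Suc (d + n - 2) choose Suc d" by simp
  moreover have "Suc (d + n - 2) = Suc d + n - 2" using step by simp
  ultimately show ?case using step by simp
qed

lemma arith_part:
  assumes "n \<ge> 3" "d \<ge> (2::nat)"
  shows "(2 * n - 1 \<le> (d + n - 2) choose d) \<longleftrightarrow> \<not> ((n = 4 \<and> d = 2) \<or> (n = 3 \<and> d = 3) \<or> (n = 3 \<and> d = 2))"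
proof -
  consider "n = 3" | "n = 4" | "n \<ge> 5" using assms by linarith
  then show ?thesis
  proof cases
    case 1
    have "(d + n - 2) choose d = Suc d choose d" using 1 by simp
    also have "\<dots> = Suc d" by (simp add: binomial_symmetric[of d "Suc d"] )
    finally show ?thesis using 1 assms by auto
  next
    case 2
    have "(d + n - 2) choose d = (d + 2) choose 2"
      using 2 binomial_symmetric[of d "d+2"] by simp
    also have "\<dots> = (d + 2) * (d + 1) div 2" by (simp add: choose_two)
    finally have e: "(d + n - 2) choose d = (d + 2) * (d + 1) div 2" .
    show ?thesis
    proof (cases "d = 2")
      case True then show ?thesis using 2 e by simp
    next
      case False
      then have "d \<ge> 3" using assms by simp
      then have "(d + 2) * (d + 1) \<ge> 5 * 4" by (intro mult_mono) auto
      then have "(d + 2) * (d + 1) div 2 \<ge> 10" by linarith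
      then show ?thesis using 2 e False by simp
    qed
  next
    case 3
    have "n * (n - 1) \<ge> n * 4" using 3 by (intro mult_le_mono2) linarith
    then have "n * (n - 1) div 2 \<ge> n * 4 div 2" by (rule div_le_mono)
    then have "n choose 2 \<ge> 2 * n - 1" by (simp add: choose_two)
    then show ?thesis using binom_mono_d[OF assms(2), of n] 3 by auto
  qed
qed



definition m0 :: "nat \<Rightarrow> monom" where "m0 d = (\<lambda>i. if i = 0 then d - 1 else 0)"
definition pp :: "nat \<Rightarrow> nat \<Rightarrow> monom" where "pp d j = (\<lambda>i. if i = j then d else 0)"
definition qq :: "nat \<Rightarrow> nat \<Rightarrow> monom" where
  "qq d j = (\<lambda>i. (if i = 0 then d - 1 else 0) + (if i = j then 1 else 0))"
definition G0 :: "nat \<Rightarrow> nat \<Rightarrow> monom set" where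
  "G0 n d = pp d ` {1..<n} \<union> qq d ` {..<n}"


lemma G0_deg:
  assumes "d \<ge> 1" "n \<ge> 1"
  shows "G0 n d \<subseteq> {m \<in> Mon n. mdeg n m = d}"
proof
  fix g assume "g \<in> G0 n d"
  then consider j where "j \<in> {1..<n}" "g = pp d j" | j where "j < n" "g = qq d j"
    unfolding G0_def by auto
  then show "g \<in> {m \<in> Mon n. mdeg n m = d}"
  proof cases
    case 1 then show ?thesis by (auto simp: Mon_def mdeg_def pp_def sum.delta')
  next
    case 2
    have "mdeg n g = (\<Sum>i<n. if i = 0 then d - 1 else 0) + (\<Sum>i<n. if i = j then 1 else 0)"
      unfolding mdeg_def 2 qq_def by (rule sum.distrib)
    also have "\<dots> = d" using 2 assms by (simp add: sum.delta')
    finally show ?thesis using 2 assms by (auto simp: Mon_def qq_def)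
  qed
qed

lemma G0_card:
  assumes "d \<ge> 2" "n \<ge> 1"
  shows "card (G0 n d) = 2 * n - 1"
proof -
  have i1: "inj_on (pp d) {1..<n}"
    by (rule inj_onI) (use assms in \<open>auto simp: pp_def fun_eq_iff split: if_splits\<close>)
  have i2: "inj_on (qq d) {..<n}"
  proof (rule inj_onI)
    fix x y assume "qq d x = qq d y"
    then have "qq d x x = qq d y x" by simp
    then show "x = y" by (auto simp: qq_def split: if_splits)
  qed
  have disj: "pp d ` {1..<n} \<inter> qq d ` {..<n} = {}"
  proof (rule ccontr)
    assume "pp d ` {1..<n} \<inter> qq d ` {..<n} \<noteq> {}"
    then obtain j k where "j \<in> {1..<n}" "pp d j = qq d k" by blast
    then have "pp d j 0 = qq d k 0" by simp
    then show False using \<open>j \<in> {1..<n}\<close> assms by (auto simp: pp_def qq_def)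
  qed
  have "card (G0 n d) = card (pp d ` {1..<n}) + card (qq d ` {..<n})"
    unfolding G0_def by (rule card_Un_disjoint) (use disj in auto)
  also have "\<dots> = (n - 1) + n" using card_image[OF i1] card_image[OF i2] by simp
  finally show ?thesis using assms by simp
qed

lemma mult_ell_add: "mult_ell n G i (x + y) = mult_ell n G i x + mult_ell n G i y"
  by (auto simp: mult_ell_def fun_eq_iff sum.distrib[symmetric] intro!: sum.cong)

lemma mult_ell_hom: "mult_ell n G i (sc a x) = sc a (mult_ell n G i x)"
  by (auto simp: mult_ell_def sc_def fun_eq_iff sum_distrib_left intro!: sum.cong)

lemma main_construction:
  fixes G :: "monom set"
  assumes n: "n \<ge> 3" and d: "d \<ge> 2"
    and G: "G0 n d \<subseteq> G" "G \<subseteq> {m \<in> Mon n. mdeg n m = d}"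
    and card: "HF_S n (d - 1) + card G \<le> HF_S n d"
  shows "minimal_gens G \<and> artinian n G \<and> fails_WLP_inj TYPE('k::field) n G (d - 1)"
proof -
  have fG: "finite G" using G(2) finite_deg finite_subset by blast
  have mg: "minimal_gens G" unfolding minimal_gens_def
  proof (intro ballI impI)
    fix g h assume "g \<in> G" "h \<in> G" "mdvd g h"
    then show "g = h" using G(2) mdvd_eq[of g n h] by auto
  qed
  have ideal_G0: "in_ideal G m" if "m \<in> G0 n d" for m
    unfolding in_ideal_def mdvd_def using that G(1) by blast
  have art: "artinian n G"
  proof -
    have "{m \<in> Mon n. \<not> in_ideal G m} \<subseteq> {f. \<forall>x. (x \<in> {..<n} \<longrightarrow> f x \<in> {..<d}) \<and> (x \<notin> {..<n} \<longrightarrow> f x = 0)}"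
    proof (rule subsetI, simp only: mem_Collect_eq, intro allI conjI impI)
      fix m x assume m: "m \<in> Mon n \<and> \<not> in_ideal G m" "x \<in> {..<n}"
      show "m x \<in> {..<d}"
      proof (rule ccontr)
        assume "m x \<notin> {..<d}"
        then have ge: "m x \<ge> d" by simp
        have "in_ideal G m"
        proof (cases "x = 0")
          case True
          have "qq d 0 \<in> G" using G(1) n by (auto simp: G0_def)
          moreover have "mdvd (qq d 0) m" using True ge d by (auto simp: mdvd_def qq_def)
          ultimately show ?thesis by (auto simp: in_ideal_def)
        next
          case False
          have "pp d x \<in> G" using G(1) m(2) False by (auto simp: G0_def)
          moreover have "mdvd (pp d x) m" using ge by (auto simp: mdvd_def pp_def)
          ultimately show ?thesis by (auto simp: in_ideal_def)
        qed
        then show False using m by simp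
      qed
    next
      fix m x assume "m \<in> Mon n \<and> \<not> in_ideal G m" "x \<notin> {..<n}" then show "m x = 0" by (auto simp: Mon_def)
    qed
    moreover have "finite {f. \<forall>x. (x \<in> {..<n} \<longrightarrow> f x \<in> {..<d}) \<and> (x \<notin> {..<n} \<longrightarrow> f x = (0::nat))}"
      by (rule finite_set_of_finite_funs) auto
    ultimately show ?thesis unfolding artinian_def by (rule finite_subset)
  qed
  have StdA: "Std n G (d - 1) = {m \<in> Mon n. mdeg n m = d - 1}"
  proof -
    have "\<not> in_ideal G m" if "mdeg n m = d - 1" for m
    proof
      assume "in_ideal G m"
      then obtain g where "g \<in> G" "mdvd g m" by (auto simp: in_ideal_def)
      then have "mdeg n g \<le> mdeg n m" using mdvd_deg by blast
      then show False using \<open>g \<in> G\<close> G(2) that d by auto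
    qed
    then show ?thesis unfolding Std_def by auto
  qed
  have SdB: "Suc (d - 1) = d" using d by simp
  have StdB: "Std n G d = {m \<in> Mon n. mdeg n m = d} - G"
  proof -
    have "in_ideal G m \<longleftrightarrow> m \<in> G" if "m \<in> Mon n" "mdeg n m = d" for m
      using mdvd_eq G(2) that unfolding in_ideal_def mdvd_def by fastforce
    then show ?thesis unfolding Std_def by auto
  qed
  have HFA: "HF n G (d - 1) = HF_S n (d - 1)" unfolding HF_def HF_S_def StdA ..
  have HFB: "HF n G d = HF_S n d - card G" unfolding HF_def HF_S_def StdB
    by (rule card_Diff_subset[OF fG G(2)])
  have HFle: "HF n G (d - 1) \<le> HF n G (Suc (d - 1))" using HFA HFB card SdB by simp
  define c0 :: "monom \<Rightarrow> 'k" where "c0 = dl (m0 d)"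
  have m0A: "m0 d \<in> Std n G (d - 1)" unfolding StdA
    using n by (auto simp: Mon_def mdeg_def m0_def sum.delta')
  have c0A: "c0 \<in> Aspace TYPE('k) n G (d - 1)"
    using m0A by (auto simp: Aspace_def c0_def dl_def)
  have c0nz: "c0 \<noteq> 0" by (auto simp: c0_def dl_def fun_eq_iff)
  have Lc0: "mult_ell n G (d - 1) c0 = 0"
  proof
    fix m'
    show "mult_ell n G (d - 1) c0 m' = 0 m'"
    proof (cases "m' \<in> Std n G (Suc (d - 1))")
      case False then show ?thesis by (simp add: mult_ell_def)
    next
      case True
      have "(if 0 < m' j then c0 (m'(j := m' j - 1)) else 0) = 0" if j: "j < n" for j
      proof (rule ccontr)
        assume "(if 0 < m' j then c0 (m'(j := m' j - 1)) else 0) \<noteq> 0"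
        then have pos: "0 < m' j" and eq: "m'(j := m' j - 1) = m0 d"
          by (auto simp: c0_def dl_def split: if_splits)
        have "m' = qq d j"
        proof
          fix i
          have "(m'(j := m' j - 1)) i = m0 d i" using eq by simp
          then show "m' i = qq d j i" using pos
            by (cases "i = j") (auto simp: m0_def qq_def split: if_splits)
        qed
        then have "m' \<in> G0 n d" using j unfolding G0_def by auto
        then have "in_ideal G m'" by (rule ideal_G0)
        then show False using True by (simp add: Std_def)
      qed
      then show ?thesis using True by (simp add: mult_ell_def)
    qed
  qed
  have L00: "mult_ell n G (d - 1) (0 :: monom \<Rightarrow> 'k) = 0"
    by (simp add: mult_ell_def fun_eq_iff zero_fun_def)
  have ninj: "\<not> inj_on (mult_ell n G (d - 1)) (Aspace TYPE('k) n G (d - 1))"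
  proof
    assume "inj_on (mult_ell n G (d - 1)) (Aspace TYPE('k) n G (d - 1))"
    moreover have "(0 :: monom \<Rightarrow> 'k) \<in> Aspace TYPE('k) n G (d - 1)" by (simp add: Aspace_def)
    ultimately have "c0 = 0" using c0A Lc0 L00 by (metis inj_onD)
    then show False using c0nz by simp
  qed
  have fA: "finite (Std n G (d - 1))" unfolding StdA by (rule finite_deg)
  have fB: "finite (Std n G (Suc (d - 1)))" unfolding SdB StdB using finite_deg by blast
  have nsurj: "mult_ell n G (d - 1) ` Aspace TYPE('k) n G (d - 1) \<noteq> Aspace TYPE('k) n G (Suc (d - 1))"
    unfolding Aspace_def Asp_def[symmetric]
    by (rule not_surj_abstract[OF fA fB mult_ell_add mult_ell_hom])
       (use c0A c0nz Lc0 HFle in \<open>auto simp: Aspace_def Asp_def HF_def\<close>)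
  show ?thesis using mg art ninj nsurj HFle
    unfolding fails_WLP_inj_def max_rank_def by simp
qed



theorem corollary4p4:
  fixes n d :: nat
  assumes "n \<ge> 3" and "d \<ge> 2"
  shows "(\<forall>\<mu>::nat. 2 * n - 1 \<le> \<mu> \<and> int \<mu> \<le> int (HF_S n d) - int (HF_S n (d - 1)) \<longrightarrow>
            (\<exists>G. G \<subseteq> Mon n \<and> finite G \<and> card G = \<mu> \<and> (\<forall>g\<in>G. mdeg n g = d) \<and>
                 minimal_gens G \<and> artinian n G \<and>
                 fails_WLP_inj TYPE('k::field_char_0) n G (d - 1)))
       \<and> (int (2 * n - 1) \<le> int (HF_S n d) - int (HF_S n (d - 1)) \<longleftrightarrow>
            (n, d) \<notin> {(4, 2), (3, 3), (3, 2)})"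
proof (intro conjI allI impI)
  fix \<mu> :: nat
  assume mu: "2 * n - 1 \<le> \<mu> \<and> int \<mu> \<le> int (HF_S n d) - int (HF_S n (d - 1))"
  define D where "D = {m \<in> Mon n. mdeg n m = d}"
  have fD: "finite D" unfolding D_def by (rule finite_deg)
  have G0D: "G0 n d \<subseteq> D" unfolding D_def using G0_deg assms by simp
  have cG0: "card (G0 n d) = 2 * n - 1" using G0_card assms by simp
  have cD: "card D = HF_S n d" unfolding D_def HF_S_def ..
  have le: "HF_S n (d - 1) + \<mu> \<le> HF_S n d" using mu by linarith
  have "card (D - G0 n d) = HF_S n d - (2 * n - 1)"
    using card_Diff_subset[OF finite_subset[OF G0D fD] G0D] cD cG0 by simp
  then have "\<mu> - (2 * n - 1) \<le> card (D - G0 n d)" using le by linarith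
  then obtain E where E: "E \<subseteq> D - G0 n d" "card E = \<mu> - (2 * n - 1)"
    by (meson obtain_subset_with_card_n)
  define G where "G = G0 n d \<union> E"
  have fE: "finite E" using E(1) fD finite_subset by blast
  have fG0: "finite (G0 n d)" using G0D fD finite_subset by blast
  have GD: "G \<subseteq> D" unfolding G_def using G0D E(1) by blast
  have cG: "card G = \<mu>" unfolding G_def
    using card_Un_disjoint[OF fG0 fE] E cG0 mu by auto
  have mc: "minimal_gens G \<and> artinian n G \<and> fails_WLP_inj TYPE('k) n G (d - 1)"
    by (rule main_construction) (use assms GD le cG in \<open>auto simp: G_def D_def\<close>)
  show "\<exists>G. G \<subseteq> Mon n \<and> finite G \<and> card G = \<mu> \<and> (\<forall>g\<in>G. mdeg n g = d) \<and>
                 minimal_gens G \<and> artinian n G \<and>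
                 fails_WLP_inj TYPE('k::field_char_0) n G (d - 1)"
    by (rule exI[of _ G]) (use mc GD cG fD finite_subset in \<open>auto simp: D_def\<close>)
next
  obtain k where k: "d = Suc k" using assms by (cases d) auto
  have e1: "d + n - 1 = Suc (k + n - 1)" using k assms by simp
  have e2: "d - 1 + n - 1 = k + n - 1" using k by simp
  have e3: "k + n - 1 = d + n - 2" using k assms by simp
  have "HF_S n d = HF_S n (d - 1) + ((d + n - 2) choose d)"
    unfolding HF_S_formula e1 e2 using k e3 by simp
  then have "(int (2 * n - 1) \<le> int (HF_S n d) - int (HF_S n (d - 1))) \<longleftrightarrow>
      (2 * n - 1 \<le> (d + n - 2) choose d)" by simp
  also have "\<dots> \<longleftrightarrow> \<not> ((n = 4 \<and> d = 2) \<or> (n = 3 \<and> d = 3) \<or> (n = 3 \<and> d = 2))"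
    by (rule arith_part[OF assms])
  finally show "(int (2 * n - 1) \<le> int (HF_S n d) - int (HF_S n (d - 1))) \<longleftrightarrow>
            (n, d) \<notin> {(4, 2), (3, 3), (3, 2)}" by auto
qed

end
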